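(* In the setting of the context, let $\alpha,\beta\in R$ be distinct roots with $\pi(\alpha)=\pi(\beta)$. Then $\pi_k[\mathfrak g_\alpha,\mathfrak g_{-\beta}]\subseteq C_{\mathfrak g}(\mathfrak h^\sigma)$ for each $k\in\mathbb Z$. Moreover, $\pi[\mathfrak g_\alpha,\mathfrak g_{-\beta}]=0$.
   Context: All Lie algebras are over $\mathbb C$. An extended affine Lie algebra (EALA) is a triple $(\mathfrak g,(\cdot,\cdot),\mathfrak h)$ where $\mathfrak g$ is a Lie algebra, $\mathfrak h$ a subalgebra and $(\cdot,\cdot)$ a bilinear form such that: the form is symmetric, non-degenerate, invariant; $\mathfrak h$ is finite-dimensional and $\mathfrak g=\bigoplus_{\alpha\in\mathfrak h^*}\mathfrak g_\alpha$, $\mathfrak g_\alpha=\{x:[h,x]=\alpha(h)x\ \forall h\in\mathfrak h\}$, $\mathfrak g_0=\mathfrak h$; with root system $R=\{\alpha:\mathfrak g_\alpha\ne0\}$ ($\mathfrak g_\gamma=0$ for $\gamma\notin R$), $t_\alpha\in\mathfrak h$ given by $\alpha(h)=(h,t_\alpha)$, $(\alpha,\beta)=(t_\alpha,t_\beta)$, $R^\times=\{\alpha\in R:(\alpha,\alpha)\ne0\}$, $R^0=R\setminus R^\times$: $\mathrm{ad}\,x$ locally nilpotent for $x\in\mathfrak g_\alpha$, $\alpha\in R^\times$; $R$ discrete; $R^\times$ connected and isotropic roots non-isolated. Root systems assumed reduced. Setting: $(\mathfrak g,(\cdot,\cdot),\mathfrak h)$ is an EALA with root system $R$; $\sigma$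 is an automorphism of $\mathfrak g$ with $\sigma^m=\mathrm{id}$ ($m\ge1$), $\sigma(\mathfrak h)=\mathfrak h$, $(\sigma x,\sigma y)=(x,y)$ for all $x,y$, and $C_{\mathfrak g^\sigma}(\mathfrak h^\sigma)=\mathfrak h^\sigma$, where $\mathfrak g^\sigma,\mathfrak h^\sigma$ are the fixed points and $C$ denotes centralizer. $\sigma$ acts on $\mathfrak h^*$ by $\sigma(\alpha)(h)=\alpha(\sigma^{-1}h)$. Let $\omega$ be a primitive $m$-th root of unity and $\pi_j=\frac1m\sum_{i=0}^{m-1}\omega^{-ij}\sigma^i$ (indices mod $m$), acting on $\mathfrak g$ and on $\mathfrak h^*$; $\pi=\pi_0$. *)

theory Defs
  imports Complex_Main
begin

text \<open>Linear functionals on the subalgebra h (elements of h-dual) are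
modelled as functions 'g => complex that are linear on h and vanish outside h.\<close>

definition lie_algebra :: "(complex \<Rightarrow> 'g::ab_group_add \<Rightarrow> 'g) \<Rightarrow> ('g \<Rightarrow> 'g \<Rightarrow> 'g) \<Rightarrow> bool" where
  "lie_algebra sc br \<longleftrightarrow> vector_space sc
     \<and> (\<forall>x y z. br (x + y) z = br x z + br y z)
     \<and> (\<forall>c x y. br (sc c x) y = sc c (br x y))
     \<and> (\<forall>x. br x x = 0)
     \<and> (\<forall>x y z. br x (br y z) + br y (br z x) + br z (br x y) = 0)"

definition lspan :: "(complex \<Rightarrow> 'g::ab_group_add \<Rightarrow> 'g) \<Rightarrow> 'g set \<Rightarrow> 'g set" where
  "lspan sc S = module.span sc S"

definition brsp :: "(complex \<Rightarrow> 'g::ab_group_add \<Rightarrow> 'g) \<Rightarrow> ('g \<Rightarrow> 'g \<Rightarrow> 'g) \<Rightarrow> 'g set \<Rightarrow> 'g set \<Rightarrow> 'g set" where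
  "brsp sc br X Y = lspan sc {br x y | x y. x \<in> X \<and> y \<in> Y}"

definition centralizer :: "('g \<Rightarrow> 'g \<Rightarrow> 'g::ab_group_add) \<Rightarrow> 'g set \<Rightarrow> 'g set \<Rightarrow> 'g set" where
  "centralizer br A S = {x \<in> A. \<forall>s\<in>S. br s x = 0}"

definition hdual :: "(complex \<Rightarrow> 'g::ab_group_add \<Rightarrow> 'g) \<Rightarrow> 'g set \<Rightarrow> ('g \<Rightarrow> complex) set" where
  "hdual sc h = {\<alpha>. (\<forall>x\<in>h. \<forall>y\<in>h. \<alpha> (x + y) = \<alpha> x + \<alpha> y)
                   \<and> (\<forall>c. \<forall>x\<in>h. \<alpha> (sc c x) = c * \<alpha> x)
                   \<and> (\<forall>x. x \<notin> h \<longrightarrow> \<alpha> x = 0)}"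

definition root_space :: "(complex \<Rightarrow> 'g::ab_group_add \<Rightarrow> 'g) \<Rightarrow> ('g \<Rightarrow> 'g \<Rightarrow> 'g) \<Rightarrow> 'g set \<Rightarrow> ('g \<Rightarrow> complex) \<Rightarrow> 'g set" where
  "root_space sc br h \<alpha> = {x. \<forall>t\<in>h. br t x = sc (\<alpha> t) x}"

definition roots :: "(complex \<Rightarrow> 'g::ab_group_add \<Rightarrow> 'g) \<Rightarrow> ('g \<Rightarrow> 'g \<Rightarrow> 'g) \<Rightarrow> 'g set \<Rightarrow> ('g \<Rightarrow> complex) set" where
  "roots sc br h = {\<alpha> \<in> hdual sc h. root_space sc br h \<alpha> \<noteq> {0}}"

definition tvec :: "('g \<Rightarrow> 'g \<Rightarrow> complex) \<Rightarrow> 'g set \<Rightarrow> ('g \<Rightarrow> complex) \<Rightarrow> 'g" where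
  "tvec B h \<alpha> = (THE t. t \<in> h \<and> (\<forall>s\<in>h. \<alpha> s = B s t))"

definition rform :: "('g \<Rightarrow> 'g \<Rightarrow> complex) \<Rightarrow> 'g set \<Rightarrow> ('g \<Rightarrow> complex) \<Rightarrow> ('g \<Rightarrow> complex) \<Rightarrow> complex" where
  "rform B h \<alpha> \<beta> = B (tvec B h \<alpha>) (tvec B h \<beta>)"

definition nonisotropic_roots where
  "nonisotropic_roots sc br B h = {\<alpha> \<in> roots sc br h. rform B h \<alpha> \<alpha> \<noteq> 0}"

definition isotropic_roots where
  "isotropic_roots sc br B h = roots sc br h - nonisotropic_roots sc br B h"

text \<open>Discreteness of R is expressed in the (pointwise) topology of h^*, which coincides
  with the usual topology since h is finite-dimensional.\<close>
definition eala :: "(complex \<Rightarrow> 'g::ab_group_add \<Rightarrow> 'g) \<Rightarrow> ('g \<Rightarrow> 'g \<Rightarrow> 'g) \<Rightarrow> ('g \<Rightarrow> 'g \<Rightarrow> complex) \<Rightarrow> 'g set \<Rightarrow> bool" where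
  "eala sc br B h \<longleftrightarrow>
     lie_algebra sc br
     \<comment> \<open>h is a finite-dimensional subalgebra\<close>
     \<and> module.subspace sc h \<and> (\<forall>x\<in>h. \<forall>y\<in>h. br x y \<in> h)
     \<and> (\<exists>F. finite F \<and> F \<subseteq> h \<and> lspan sc F = h)
     \<comment> \<open>the form is bilinear, symmetric, non-degenerate, invariant\<close>
     \<and> (\<forall>x y z. B (x + y) z = B x z + B y z)
     \<and> (\<forall>c x y. B (sc c x) y = c * B x y)
     \<and> (\<forall>x y. B x y = B y x)
     \<and> (\<forall>x. (\<forall>y. B x y = 0) \<longrightarrow> x = 0)
     \<and> (\<forall>x y z. B (br x y) z = B x (br y z))
     \<comment> \<open>g = direct sum of the root spaces g_alpha, alpha in h^*\<close>
     \<and> (\<forall>x. x \<in> lspan sc (\<Union>\<alpha>\<in>hdual sc h. root_space sc br h \<alpha>))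
     \<and> (\<forall>S f. finite S \<and> S \<subseteq> hdual sc h \<and> (\<forall>\<alpha>\<in>S. f \<alpha> \<in> root_space sc br h \<alpha>)
              \<and> sum f S = 0 \<longrightarrow> (\<forall>\<alpha>\<in>S. f \<alpha> = 0))
     \<comment> \<open>g_0 = h\<close>
     \<and> root_space sc br h (\<lambda>_. 0) = h
     \<comment> \<open>ad x locally nilpotent for x in g_alpha, alpha in R^x\<close>
     \<and> (\<forall>\<alpha>\<in>nonisotropic_roots sc br B h. \<forall>x\<in>root_space sc br h \<alpha>. \<forall>y. \<exists>n. (br x ^^ n) y = 0)
     \<comment> \<open>R is discrete\<close>
     \<and> (\<forall>\<alpha>\<in>roots sc br h. \<exists>\<epsilon>>0. \<exists>F. finite F \<and> F \<subseteq> h \<and>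
           (\<forall>\<beta>\<in>roots sc br h. \<beta> \<noteq> \<alpha> \<longrightarrow> (\<exists>s\<in>F. cmod (\<beta> s - \<alpha> s) \<ge> \<epsilon>)))
     \<comment> \<open>R^x is connected\<close>
     \<and> \<not> (\<exists>R1 R2. R1 \<noteq> {} \<and> R2 \<noteq> {} \<and> R1 \<union> R2 = nonisotropic_roots sc br B h \<and> R1 \<inter> R2 = {}
               \<and> (\<forall>\<alpha>\<in>R1. \<forall>\<beta>\<in>R2. rform B h \<alpha> \<beta> = 0))
     \<comment> \<open>isotropic roots are non-isolated\<close>
     \<and> (\<forall>\<delta>\<in>isotropic_roots sc br B h. \<exists>\<alpha>\<in>nonisotropic_roots sc br B h. (\<lambda>s. \<delta> s + \<alpha> s) \<in> roots sc br h)
     \<comment> \<open>R is reduced\<close>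
     \<and> (\<forall>\<alpha>\<in>nonisotropic_roots sc br B h. (\<lambda>s. 2 * \<alpha> s) \<notin> roots sc br h)"

definition admissible_aut :: "(complex \<Rightarrow> 'g::ab_group_add \<Rightarrow> 'g) \<Rightarrow> ('g \<Rightarrow> 'g \<Rightarrow> 'g) \<Rightarrow> ('g \<Rightarrow> 'g \<Rightarrow> complex) \<Rightarrow> 'g set \<Rightarrow> ('g \<Rightarrow> 'g) \<Rightarrow> nat \<Rightarrow> bool" where
  "admissible_aut sc br B h \<sigma> m \<longleftrightarrow>
     m \<ge> 1
     \<and> bij \<sigma>
     \<and> (\<forall>x y. \<sigma> (x + y) = \<sigma> x + \<sigma> y)
     \<and> (\<forall>c x. \<sigma> (sc c x) = sc c (\<sigma> x))
     \<and> (\<forall>x y. \<sigma> (br x y) = br (\<sigma> x) (\<sigma> y))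
     \<and> (\<sigma> ^^ m) = id
     \<and> \<sigma> ` h = h
     \<and> (\<forall>x y. B (\<sigma> x) (\<sigma> y) = B x y)
     \<and> centralizer br {x. \<sigma> x = x} (h \<inter> {x. \<sigma> x = x}) = h \<inter> {x. \<sigma> x = x}"

definition primitive_root :: "complex \<Rightarrow> nat \<Rightarrow> bool" where
  "primitive_root \<omega> m \<longleftrightarrow> \<omega> ^ m = 1 \<and> (\<forall>k. 0 < k \<and> k < m \<longrightarrow> \<omega> ^ k \<noteq> 1)"

definition pi_g :: "(complex \<Rightarrow> 'g::ab_group_add \<Rightarrow> 'g) \<Rightarrow> ('g \<Rightarrow> 'g) \<Rightarrow> nat \<Rightarrow> complex \<Rightarrow> int \<Rightarrow> 'g \<Rightarrow> 'g" where
  "pi_g sc \<sigma> m \<omega> j x = sc (1 / of_nat m) (\<Sum>i<m. sc (\<omega> powi (- (int i * j))) ((\<sigma> ^^ i) x))"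

definition sigma_dual :: "('g \<Rightarrow> 'g) \<Rightarrow> ('g \<Rightarrow> complex) \<Rightarrow> ('g \<Rightarrow> complex)" where
  "sigma_dual \<sigma> \<alpha> = (\<lambda>s. \<alpha> (inv \<sigma> s))"

definition pi_dual :: "('g \<Rightarrow> 'g) \<Rightarrow> nat \<Rightarrow> complex \<Rightarrow> int \<Rightarrow> ('g \<Rightarrow> complex) \<Rightarrow> ('g \<Rightarrow> complex)" where
  "pi_dual \<sigma> m \<omega> j \<alpha> = (\<lambda>s. (1 / of_nat m) * (\<Sum>i<m. \<omega> powi (- (int i * j)) * ((sigma_dual \<sigma> ^^ i) \<alpha>) s))"

end

theory Submission
  imports Defs
begin

lemma lie_basic:
  assumes E: "eala sc br B h"
  shows "br x y = - br y x" "br x (y + z) = br x y + br x z"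
    "br x (sc c y) = sc c (br x y)" "br x 0 = 0" "br 0 x = 0"
    "br x (sum f A) = (\<Sum>a\<in>A. br x (f a))"
proof -
  have L: "lie_algebra sc br" using E unfolding eala_def by auto
  interpret V: vector_space sc using L unfolding lie_algebra_def by auto
  have add: "br (a + b) c = br a c + br b c" for a b c using L unfolding lie_algebra_def by auto
  have al: "br a a = 0" for a using L unfolding lie_algebra_def by auto
  have sl: "br (sc c a) b = sc c (br a b)" for a b c using L unfolding lie_algebra_def by auto
  have Badd: "B (a + b) c = B a c + B b c" for a b c using E unfolding eala_def by auto
  have Bsc: "B (sc k a) b = k * B a b" for k a b using E unfolding eala_def by auto
  have Bsym: "B a b = B b a" for a b using E unfolding eala_def by auto
  have Bnd: "(\<And>w. B d w = 0) \<Longrightarrow> d = 0" for d using E unfolding eala_def by auto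
  have Binv: "B (br a b) c = B a (br b c)" for a b c using E unfolding eala_def by auto
  have Badd2: "B a (b + c) = B a b + B a c" for a b c using Badd Bsym by metis
  have Bdiff: "B (a - b) c = B a c - B b c" for a b c
    using Badd[of "a - b" b c] by simp
  have ra: "br a (b + c) = br a b + br a c" for a b c
  proof -
    have "B (br a (b + c) - (br a b + br a c)) w = 0" for w
    proof -
      have "B (br a (b + c)) w = B a (br b w) + B a (br c w)" using Binv add Badd2 by simp
      also have "\<dots> = B (br a b + br a c) w" using Binv Badd by simp
      finally show ?thesis using Bdiff by simp
    qed
    hence "br a (b + c) - (br a b + br a c) = 0" by (rule Bnd)
    thus ?thesis by simp
  qed
  have rs: "br a (sc k b) = sc k (br a b)" for a b k
  proof -
    have "B (br a (sc k b) - sc k (br a b)) w = 0" for w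
    proof -
      have "B (br a (sc k b)) w = B a (sc k (br b w))" using Binv sl by simp
      also have "\<dots> = k * B a (br b w)" using Bsc Bsym by metis
      also have "\<dots> = B (sc k (br a b)) w" using Bsc Binv by simp
      finally show ?thesis using Bdiff by simp
    qed
    hence "br a (sc k b) - sc k (br a b) = 0" by (rule Bnd)
    thus ?thesis by simp
  qed
  have anti: "br a b = - br b a" for a b
  proof -
    have "0 = br (a + b) (a + b)" using al by simp
    also have "\<dots> = br a b + br b a" unfolding add ra by (simp add: al)
    finally show ?thesis by (metis eq_neg_iff_add_eq_0)
  qed
  show "br x y = - br y x" by (rule anti)
  show "br x (y + z) = br x y + br x z" by (rule ra)
  show "br x (sc c y) = sc c (br x y)" by (rule rs)
  have z0: "br 0 a = 0" for a using add[of 0 0 a] by simp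
  show "br 0 x = 0" by (rule z0)
  show "br x 0 = 0" using ra[of x 0 0] by simp
  show "br x (sum f A) = (\<Sum>a\<in>A. br x (f a))"
    by (induct A rule: infinite_finite_induct) (simp_all add: ra \<open>br x 0 = 0\<close>)
qed

lemma root_space_subspace:
  assumes E: "eala sc br B h"
  shows "module.subspace sc (root_space sc br h \<delta>)"
proof -
  have L: "lie_algebra sc br" using E unfolding eala_def by auto
  interpret V: vector_space sc using L unfolding lie_algebra_def by auto
  show ?thesis unfolding V.subspace_def root_space_def
    using lie_basic(2-4)[OF E] by (auto simp: V.scale_right_distrib V.scale_left_commute)
qed

lemma br_root:
  assumes E: "eala sc br B h"
    and x: "x \<in> root_space sc br h \<alpha>" and y: "y \<in> root_space sc br h (\<lambda>s. - \<beta> s)"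
  shows "br x y \<in> root_space sc br h (\<lambda>s. \<alpha> s - \<beta> s)"
proof -
  have L: "lie_algebra sc br" using E unfolding eala_def by auto
  interpret V: vector_space sc using L unfolding lie_algebra_def by auto
  have J: "br t (br x y) + br x (br y t) + br y (br t x) = 0" for t
    using L unfolding lie_algebra_def by auto
  show ?thesis unfolding root_space_def mem_Collect_eq
  proof
    fix t assume t: "t \<in> h"
    have tx: "br t x = sc (\<alpha> t) x" using x t unfolding root_space_def by auto
    have ty: "br t y = sc (- \<beta> t) y" using y t unfolding root_space_def by auto
    have "br y t = sc (\<beta> t) y" using ty lie_basic(1)[OF E, of y t] by simp
    hence 1: "br x (br y t) = sc (\<beta> t) (br x y)" using lie_basic(3)[OF E] by simp
    have 2: "br y (br t x) = - sc (\<alpha> t) (br x y)"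
      using tx lie_basic(3)[OF E] lie_basic(1)[OF E, of y x] by simp
    have "br t (br x y) + (br x (br y t) + br y (br t x)) = 0"
      using J[of t] by (simp add: add.assoc)
    hence "br t (br x y) = - (br x (br y t) + br y (br t x))"
      by (simp only: eq_neg_iff_add_eq_0)
    also have "\<dots> = sc (\<alpha> t) (br x y) - sc (\<beta> t) (br x y)" unfolding 1 2 by simp
    finally show "br t (br x y) = sc (\<alpha> t - \<beta> t) (br x y)" by (simp add: V.scale_left_diff_distrib)
  qed
qed

lemma brsp_root:
  assumes E: "eala sc br B h"
  shows "brsp sc br (root_space sc br h \<alpha>) (root_space sc br h (\<lambda>s. - \<beta> s))
     \<subseteq> root_space sc br h (\<lambda>s. \<alpha> s - \<beta> s)"
proof -
  have L: "lie_algebra sc br" using E unfolding eala_def by auto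
  interpret V: vector_space sc using L unfolding lie_algebra_def by auto
  show ?thesis unfolding brsp_def lspan_def
    apply (rule V.span_minimal)
    using br_root[OF E] root_space_subspace[OF E] by auto
qed


lemma sig_basic:
  assumes E: "eala sc br B h" and S: "admissible_aut sc br B h \<sigma> m"
  shows "\<sigma> (inv \<sigma> y) = y" "inv \<sigma> (\<sigma> x) = x"
    "t \<in> h \<Longrightarrow> inv \<sigma> t \<in> h" "t \<notin> h \<Longrightarrow> inv \<sigma> t \<notin> h"
    "inv \<sigma> (x + y) = inv \<sigma> x + inv \<sigma> y" "inv \<sigma> (sc c x) = sc c (inv \<sigma> x)"
    "\<sigma> t = t \<Longrightarrow> inv \<sigma> t = t"
    "\<sigma> (sum f A) = (\<Sum>a\<in>A. \<sigma> (f a))"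
    "(\<sigma> ^^ i) (sum f A) = (\<Sum>a\<in>A. (\<sigma> ^^ i) (f a))"
proof -
  have bij: "bij \<sigma>" and sa: "\<And>x y. \<sigma> (x + y) = \<sigma> x + \<sigma> y"
    and ss: "\<And>c x. \<sigma> (sc c x) = sc c (\<sigma> x)" and sh: "\<sigma> ` h = h"
    using S unfolding admissible_aut_def by auto
  have inj: "inj \<sigma>" and surj: "surj \<sigma>" using bij bij_is_inj bij_is_surj by auto
  show fi: "\<sigma> (inv \<sigma> y) = y" for y using surj by (simp add: surj_f_inv_f)
  show if': "inv \<sigma> (\<sigma> x) = x" for x using inj by simp
  show "t \<in> h \<Longrightarrow> inv \<sigma> t \<in> h"
  proof -
    assume "t \<in> h" then obtain s where "s \<in> h" "t = \<sigma> s" using sh by blast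
    thus ?thesis using if' by simp
  qed
  show "t \<notin> h \<Longrightarrow> inv \<sigma> t \<notin> h"
  proof
    assume "t \<notin> h" "inv \<sigma> t \<in> h"
    hence "\<sigma> (inv \<sigma> t) \<in> h" using sh by blast
    thus False using fi \<open>t \<notin> h\<close> by simp
  qed
  show "inv \<sigma> (x + y) = inv \<sigma> x + inv \<sigma> y"
    by (rule injD[OF inj]) (simp add: sa fi)
  show "inv \<sigma> (sc c x) = sc c (inv \<sigma> x)"
    by (rule injD[OF inj]) (simp add: ss fi)
  show "\<sigma> t = t \<Longrightarrow> inv \<sigma> t = t" using if' by metis
  have z: "\<sigma> 0 = 0" using sa[of 0 0] by simp
  show sg: "\<sigma> (sum f A) = (\<Sum>a\<in>A. \<sigma> (f a))" for f and A :: "'b set"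
    by (induct A rule: infinite_finite_induct) (simp_all add: z sa)
  show "(\<sigma> ^^ i) (sum f A) = (\<Sum>a\<in>A. (\<sigma> ^^ i) (f a))"
    by (induct i) (simp_all add: sg)
qed

lemma sigma_dual_hdual:
  assumes E: "eala sc br B h" and S: "admissible_aut sc br B h \<sigma> m"
    and d: "\<delta> \<in> hdual sc h"
  shows "(sigma_dual \<sigma> ^^ i) \<delta> \<in> hdual sc h"
proof (induct i)
  case 0 thus ?case using d by simp
next
  case (Suc i)
  let ?d = "(sigma_dual \<sigma> ^^ i) \<delta>"
  show ?case using Suc unfolding hdual_def sigma_dual_def
    by (simp add: sig_basic[OF E S])
qed

lemma root_sigma:
  assumes E: "eala sc br B h" and S: "admissible_aut sc br B h \<sigma> m"
    and x: "x \<in> root_space sc br h \<delta>"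
  shows "\<sigma> x \<in> root_space sc br h (sigma_dual \<sigma> \<delta>)"
proof -
  have sb: "\<And>x y. \<sigma> (br x y) = br (\<sigma> x) (\<sigma> y)"
    and ss: "\<And>c x. \<sigma> (sc c x) = sc c (\<sigma> x)"
    using S unfolding admissible_aut_def by auto
  show ?thesis unfolding root_space_def mem_Collect_eq sigma_dual_def
  proof
    fix t assume t: "t \<in> h"
    have "br t (\<sigma> x) = br (\<sigma> (inv \<sigma> t)) (\<sigma> x)" using sig_basic(1)[OF E S] by simp
    also have "\<dots> = \<sigma> (br (inv \<sigma> t) x)" using sb by simp
    also have "\<dots> = \<sigma> (sc (\<delta> (inv \<sigma> t)) x)"
      using x sig_basic(3)[OF E S t] unfolding root_space_def by simp
    finally show "br t (\<sigma> x) = sc (\<delta> (inv \<sigma> t)) (\<sigma> x)" using ss by simp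
  qed
qed

lemma root_funpow:
  assumes E: "eala sc br B h" and S: "admissible_aut sc br B h \<sigma> m"
    and x: "x \<in> root_space sc br h \<delta>"
  shows "(\<sigma> ^^ i) x \<in> root_space sc br h ((sigma_dual \<sigma> ^^ i) \<delta>)"
  by (induct i) (simp_all add: x root_sigma[OF E S])

lemma dual_nonzero:
  assumes E: "eala sc br B h" and S: "admissible_aut sc br B h \<sigma> m"
    and d: "\<delta> \<noteq> (\<lambda>_. 0)"
  shows "(sigma_dual \<sigma> ^^ i) \<delta> \<noteq> (\<lambda>_. 0)"
proof (induct i)
  case 0 thus ?case using d by simp
next
  case (Suc i)
  show ?case
  proof
    assume a: "(sigma_dual \<sigma> ^^ Suc i) \<delta> = (\<lambda>_. 0)"
    have "(sigma_dual \<sigma> ^^ i) \<delta> s = 0" for s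
      using fun_cong[OF a, of "\<sigma> s"] by (simp add: sigma_dual_def sig_basic(2)[OF E S])
    thus False using Suc by auto
  qed
qed

lemma dual_fixed:
  assumes E: "eala sc br B h" and S: "admissible_aut sc br B h \<sigma> m"
    and t: "\<sigma> t = t"
  shows "(sigma_dual \<sigma> ^^ i) \<delta> t = \<delta> t"
  by (induct i) (simp_all add: sigma_dual_def sig_basic(7)[OF E S t])

lemma sum_shift_cyc:
  fixes f :: "nat \<Rightarrow> 'a::ab_group_add"
  assumes "f m = f 0"
  shows "(\<Sum>i<m. f (Suc i)) = (\<Sum>i<m. f i)"
proof -
  have "f 0 + (\<Sum>i<m. f (Suc i)) = (\<Sum>i<m. f i) + f m"
    using sum.lessThan_Suc_shift[of f m] sum.lessThan_Suc[of f m] by simp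
  thus ?thesis using assms by (simp add: add.commute)
qed


theorem lemma5p3:
  fixes sc :: "complex \<Rightarrow> 'g::ab_group_add \<Rightarrow> 'g"
    and br :: "'g \<Rightarrow> 'g \<Rightarrow> 'g"
    and B :: "'g \<Rightarrow> 'g \<Rightarrow> complex"
    and h :: "'g set"
    and \<sigma> :: "'g \<Rightarrow> 'g"
    and m :: nat
    and \<omega> :: complex
    and \<alpha> \<beta> :: "'g \<Rightarrow> complex"
  assumes "eala sc br B h"
    and "admissible_aut sc br B h \<sigma> m"
    and "primitive_root \<omega> m"
    and "\<alpha> \<in> roots sc br h" and "\<beta> \<in> roots sc br h" and "\<alpha> \<noteq> \<beta>"
    and "pi_dual \<sigma> m \<omega> 0 \<alpha> = pi_dual \<sigma> m \<omega> 0 \<beta>"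
  shows "(\<forall>k::int. pi_g sc \<sigma> m \<omega> k ` brsp sc br (root_space sc br h \<alpha>) (root_space sc br h (\<lambda>s. - \<beta> s))
            \<subseteq> centralizer br UNIV (h \<inter> {x. \<sigma> x = x}))
       \<and> pi_g sc \<sigma> m \<omega> 0 ` brsp sc br (root_space sc br h \<alpha>) (root_space sc br h (\<lambda>s. - \<beta> s)) = {0}"
proof -
  note E = assms(1) and S = assms(2)
  have L: "lie_algebra sc br" using E unfolding eala_def by auto
  interpret V: vector_space sc using L unfolding lie_algebra_def by auto
  have m1: "m \<ge> 1" and sm: "\<sigma> ^^ m = id"
    and cent: "centralizer br {x. \<sigma> x = x} (h \<inter> {x. \<sigma> x = x}) = h \<inter> {x. \<sigma> x = x}"
    using S unfolding admissible_aut_def by auto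
  have hsub: "V.subspace h" and h0: "root_space sc br h (\<lambda>_. 0) = h"
    and indep: "\<And>S f. finite S \<Longrightarrow> S \<subseteq> hdual sc h \<Longrightarrow> (\<forall>\<alpha>\<in>S. f \<alpha> \<in> root_space sc br h \<alpha>)
              \<Longrightarrow> sum f S = 0 \<Longrightarrow> (\<forall>\<alpha>\<in>S. f \<alpha> = 0)"
    using E unfolding eala_def by auto
  define \<gamma> where "\<gamma> = (\<lambda>s. \<alpha> s - \<beta> s)"
  define BS where "BS = brsp sc br (root_space sc br h \<alpha>) (root_space sc br h (\<lambda>s. - \<beta> s))"
  have BSg: "z \<in> BS \<Longrightarrow> z \<in> root_space sc br h \<gamma>" for z
    using brsp_root[OF E] unfolding BS_def \<gamma>_def by blast
  have ab: "\<alpha> t = \<beta> t" if t: "\<sigma> t = t" for t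
  proof -
    have "pi_dual \<sigma> m \<omega> 0 \<alpha> t = \<alpha> t" for \<alpha>
      using m1 by (simp add: pi_dual_def dual_fixed[OF E S t])
    thus ?thesis using fun_cong[OF assms(7), of t] by simp
  qed
  have g0: "\<gamma> t = 0" if "\<sigma> t = t" for t using ab[OF that] unfolding \<gamma>_def by simp
  have part1: "pi_g sc \<sigma> m \<omega> k z \<in> centralizer br UNIV (h \<inter> {x. \<sigma> x = x})"
    if z: "z \<in> BS" for k z
  proof -
    have "br s (pi_g sc \<sigma> m \<omega> k z) = 0" if s: "s \<in> h" "\<sigma> s = s" for s
    proof -
      have "br s ((\<sigma> ^^ i) z) = 0" for i
      proof -
        have "(\<sigma> ^^ i) z \<in> root_space sc br h ((sigma_dual \<sigma> ^^ i) \<gamma>)"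
          by (rule root_funpow[OF E S BSg[OF z]])
        hence "br s ((\<sigma> ^^ i) z) = sc ((sigma_dual \<sigma> ^^ i) \<gamma> s) ((\<sigma> ^^ i) z)"
          using s unfolding root_space_def by auto
        thus ?thesis using dual_fixed[OF E S s(2)] g0[OF s(2)] by simp
      qed
      thus ?thesis unfolding pi_g_def by (simp add: lie_basic(3,6)[OF E])
    qed
    thus ?thesis unfolding centralizer_def by auto
  qed
  have part2: "pi_g sc \<sigma> m \<omega> 0 z = 0" if z: "z \<in> BS" for z
  proof -
    define y where "y = (\<Sum>i<m. (\<sigma> ^^ i) z)"
    define w where "w = pi_g sc \<sigma> m \<omega> 0 z"
    have wy: "w = sc (1 / of_nat m) y" unfolding w_def y_def pi_g_def by simp
    have "\<sigma> y = (\<Sum>i<m. (\<sigma> ^^ Suc i) z)" unfolding y_def by (simp add: sig_basic(8)[OF E S])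
    also have "\<dots> = y" unfolding y_def
      by (rule sum_shift_cyc[where f = "\<lambda>i. (\<sigma> ^^ i) z"]) (simp add: sm)
    finally have sy: "\<sigma> y = y" .
    have "\<sigma> w = w" unfolding wy using sy S unfolding admissible_aut_def by simp
    moreover have "w \<in> centralizer br UNIV (h \<inter> {x. \<sigma> x = x})" unfolding w_def by (rule part1[OF z])
    ultimately have "w \<in> centralizer br {x. \<sigma> x = x} (h \<inter> {x. \<sigma> x = x})"
      unfolding centralizer_def by auto
    hence wh: "w \<in> h" using cent by auto
    have "y = sc (of_nat m) w" unfolding wy using m1 by simp
    hence yh: "y \<in> h" using wh V.subspace_scale[OF hsub] by simp
    define d where "d = (\<lambda>i. (sigma_dual \<sigma> ^^ i) \<gamma>)"
    define D where "D = d ` {..<m}"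
    define F where "F = (\<lambda>\<delta>. \<Sum>i\<in>{i\<in>{..<m}. d i = \<delta>}. (\<sigma> ^^ i) z)"
    define f where "f = F((\<lambda>_. 0) := - y)"
    have ahd: "\<alpha> \<in> hdual sc h" and bhd: "\<beta> \<in> hdual sc h" using assms(4,5) unfolding roots_def by auto
    have ghd: "\<gamma> \<in> hdual sc h" unfolding hdual_def mem_Collect_eq \<gamma>_def
    proof (intro conjI ballI allI impI)
      fix x y assume "x \<in> h" "y \<in> h"
      thus "\<alpha> (x + y) - \<beta> (x + y) = \<alpha> x - \<beta> x + (\<alpha> y - \<beta> y)"
        using ahd bhd unfolding hdual_def by simp
    next
      fix c x assume "x \<in> h"
      thus "\<alpha> (sc c x) - \<beta> (sc c x) = c * (\<alpha> x - \<beta> x)"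
        using ahd bhd unfolding hdual_def by (simp add: right_diff_distrib)
    next
      fix x assume "x \<notin> h"
      thus "\<alpha> x - \<beta> x = 0" using ahd bhd unfolding hdual_def by simp
    qed
    have gnz: "\<gamma> \<noteq> (\<lambda>_. 0)"
    proof
      assume a: "\<gamma> = (\<lambda>_. 0)"
      have "\<alpha> s = \<beta> s" for s using fun_cong[OF a, of s] unfolding \<gamma>_def by simp
      hence "\<alpha> = \<beta>" by (rule ext)
      thus False using assms(6) by simp
    qed
    have finD: "finite D" unfolding D_def by simp
    have nD: "(\<lambda>_. 0) \<notin> D"
    proof
      assume "(\<lambda>_. 0) \<in> D"
      then obtain i where "d i = (\<lambda>_. 0)" unfolding D_def by (metis imageE)
      thus False using dual_nonzero[OF E S gnz, of i] unfolding d_def by simp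
    qed
    have yF: "y = sum F D" unfolding y_def F_def D_def by (rule sum.image_gen) simp
    have "sum f (insert (\<lambda>_. 0) D) = f (\<lambda>_. 0) + sum f D" using finD nD by simp
    also have "sum f D = sum F D" unfolding f_def using nD by (intro sum.cong) auto
    finally have sf: "sum f (insert (\<lambda>_. 0) D) = 0" using yF unfolding f_def by simp
    have Shd: "insert (\<lambda>_. 0) D \<subseteq> hdual sc h"
      unfolding D_def d_def using sigma_dual_hdual[OF E S ghd] by (auto simp: hdual_def)
    have froot: "\<forall>\<delta>\<in>insert (\<lambda>_. 0) D. f \<delta> \<in> root_space sc br h \<delta>"
    proof
      fix \<delta> assume "\<delta> \<in> insert (\<lambda>_. 0) D"
      then consider "\<delta> = (\<lambda>_. 0)" | "\<delta> \<in> D" "\<delta> \<noteq> (\<lambda>_. 0)" using nD by auto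
      thus "f \<delta> \<in> root_space sc br h \<delta>"
      proof cases
        case 1 thus ?thesis unfolding f_def using h0 yh V.subspace_neg[OF hsub] by simp
      next
        case 2
        have "F \<delta> \<in> root_space sc br h \<delta>" unfolding F_def
          apply (rule V.subspace_sum[OF root_space_subspace[OF E]])
          using root_funpow[OF E S BSg[OF z]] unfolding d_def by auto
        thus ?thesis unfolding f_def using 2 by simp
      qed
    qed
    have "f (\<lambda>_. 0) = 0" using indep[OF _ Shd froot sf] finD by simp
    hence "y = 0" unfolding f_def by simp
    thus ?thesis using wy unfolding w_def by simp
  qed
  have "BS \<noteq> {}" unfolding BS_def brsp_def lspan_def using V.span_zero by blast
  hence "pi_g sc \<sigma> m \<omega> 0 ` BS = {0}" using part2 by auto
  thus ?thesis using part1 unfolding BS_def by blast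
qed

end
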